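(* Let $L_x,L_y>0$, $L_{xy}\geq 0$, and let $F\in\mathcal{F}(L_x, L_y, L_{xy}, 0, 0)$ (i.e. $F$ is smooth convex-concave, see context) with nonempty saddle point set $S^\star$. Let $L=\max\{L_x, L_y\}$. Assume $F$ has a quadratic gradient growth with constant $\mu_F>0$. If $t\in\left(0, \tfrac{2 \mu_F}{L \mu_F+2L_{xy} \sqrt{\mu_F (L-\mu_F)}+L_{xy}^2}\right)$, then for every $(x^1,y^1)\in\mathbb{R}^n\times\mathbb{R}^m$, the point $x^{2}=x^1-t\nabla_x F(x^1, y^1)$, $y^{2}=y^1+t\nabla_y F(x^1, y^1)$ satisfies $$ d_{S^\star}^2((x^2, y^2))\leq \alpha\, d_{S^\star}^2((x^1, y^1)), $$ where $$ \alpha=t \left(2 tL_{xy} \sqrt{\mu_F (L-\mu_F)}+\mu_F (L t-2)+tL_{xy}^2\right)+1. $$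
   Context: $\mathcal{F}(L_x, L_y, L_{xy}, 0, 0)$ denotes the set of differentiable $F:\mathbb{R}^n\times\mathbb{R}^m\to\mathbb{R}$ with $F(\cdot,y)$ convex for all $y$, $F(x,\cdot)$ concave for all $x$, and for all $x,x_1,x_2,y,y_1,y_2$: $\|\nabla_x F(x_2, y)-\nabla_x F(x_1, y)\|\leq L_x\|x_2-x_1\|$; $\|\nabla_y F(x, y_2)-\nabla_y F(x, y_1)\|\leq L_y\|y_2-y_1\|$; $\|\nabla_x F(x, y_2)-\nabla_x F(x, y_1)\|\leq L_{xy}\|y_2-y_1\|$; $\|\nabla_y F(x_2, y)-\nabla_y F(x_1, y)\|\leq L_{xy}\|x_2-x_1\|$. $S^\star$ is the set of saddle points $(x^\star,y^\star)$, i.e. $F(x^\star, y)\leq F(x^\star, y^\star)\leq F(x, y^\star)$ for all $x,y$; it is closed and convex. $d_{S^\star}(z)=\inf_{w\in S^\star}\|z-w\|$. $F$ has quadratic gradient growth with $\mu_F>0$ if for all $(x,y)$: $\langle \nabla_x F(x,y), x-x^\star\rangle-\langle \nabla_y F(x,y), y-y^\star\rangle \geq \mu_F\, d_{S^\star}^2((x,y))$, where $(x^\star,y^\star)$ is the Euclidean projection of $(x,y)$ onto $S^\star$. *)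

theory Defs
  imports "HOL-Analysis.Analysis"
begin

text \<open>F :: 'a => 'b => real with 'a, 'b Euclidean spaces (playing R^n, R^m).
  Gx x y and Gy x y are the partial gradients nabla_x F(x,y), nabla_y F(x,y).\<close>

definition partial_gradients ::
  "('a::euclidean_space \<Rightarrow> 'b::euclidean_space \<Rightarrow> real) \<Rightarrow> ('a \<Rightarrow> 'b \<Rightarrow> 'a) \<Rightarrow> ('a \<Rightarrow> 'b \<Rightarrow> 'b) \<Rightarrow> bool" where
  "partial_gradients F Gx Gy \<longleftrightarrow>
     (\<forall>x y. ((\<lambda>u. F u y) has_derivative (\<lambda>h. Gx x y \<bullet> h)) (at x)) \<and>
     (\<forall>x y. ((\<lambda>v. F x v) has_derivative (\<lambda>h. Gy x y \<bullet> h)) (at y))"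

definition smooth_convex_concave ::
  "real \<Rightarrow> real \<Rightarrow> real \<Rightarrow> ('a::euclidean_space \<Rightarrow> 'b::euclidean_space \<Rightarrow> real)
   \<Rightarrow> ('a \<Rightarrow> 'b \<Rightarrow> 'a) \<Rightarrow> ('a \<Rightarrow> 'b \<Rightarrow> 'b) \<Rightarrow> bool" where
  "smooth_convex_concave Lx Ly Lxy F Gx Gy \<longleftrightarrow>
     (\<forall>p. (\<lambda>(x, y). F x y) differentiable (at p)) \<and>
     partial_gradients F Gx Gy \<and>
     (\<forall>y. convex_on UNIV (\<lambda>x. F x y)) \<and>
     (\<forall>x. concave_on UNIV (\<lambda>y. F x y)) \<and>
     (\<forall>x1 x2 y. norm (Gx x2 y - Gx x1 y) \<le> Lx * norm (x2 - x1)) \<and>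
     (\<forall>x y1 y2. norm (Gy x y2 - Gy x y1) \<le> Ly * norm (y2 - y1)) \<and>
     (\<forall>x y1 y2. norm (Gx x y2 - Gx x y1) \<le> Lxy * norm (y2 - y1)) \<and>
     (\<forall>x1 x2 y. norm (Gy x2 y - Gy x1 y) \<le> Lxy * norm (x2 - x1))"

definition saddle_points :: "('a \<Rightarrow> 'b \<Rightarrow> real) \<Rightarrow> ('a \<times> 'b) set" where
  "saddle_points F = {(xs, ys). \<forall>x y. F xs y \<le> F xs ys \<and> F xs ys \<le> F x ys}"

definition quadratic_gradient_growth ::
  "('a::euclidean_space \<Rightarrow> 'b::euclidean_space \<Rightarrow> real) \<Rightarrow> ('a \<Rightarrow> 'b \<Rightarrow> 'a) \<Rightarrow> ('a \<Rightarrow> 'b \<Rightarrow> 'b) \<Rightarrow> real \<Rightarrow> bool" where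
  "quadratic_gradient_growth F Gx Gy \<mu> \<longleftrightarrow> \<mu> > 0 \<and>
     (\<forall>x y. let p = closest_point (saddle_points F) (x, y) in
        Gx x y \<bullet> (x - fst p) - Gy x y \<bullet> (y - snd p)
          \<ge> \<mu> * (infdist (x, y) (saddle_points F))\<^sup>2)"

end

theory Submission
  imports Defs
begin


lemma line_deriv:
  fixes f :: "'v::real_inner \<Rightarrow> real"
  assumes "\<And>u. (f has_derivative (\<lambda>h. g u \<bullet> h)) (at u)"
  shows "((\<lambda>r. f (x + r *\<^sub>R h)) has_real_derivative (g (x + r *\<^sub>R h) \<bullet> h)) (at r)"
proof -
  have "((\<lambda>r. x + r *\<^sub>R h) has_derivative (\<lambda>r. r *\<^sub>R h)) (at r)"
    by (intro derivative_eq_intros) auto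
  then have "((\<lambda>r. f (x + r *\<^sub>R h)) has_derivative (\<lambda>k. g (x + r *\<^sub>R h) \<bullet> (k *\<^sub>R h))) (at r)"
    by (rule has_derivative_compose, simp add: assms)
  moreover have "(\<lambda>k. g (x + r *\<^sub>R h) \<bullet> (k *\<^sub>R h)) = (*) (g (x + r *\<^sub>R h) \<bullet> h)"
    by (rule ext) (simp add: mult.commute)
  ultimately show ?thesis
    unfolding has_field_derivative_def by simp
qed

lemma descent:
  fixes f :: "'v::real_inner \<Rightarrow> real"
  assumes d: "\<And>u. (f has_derivative (\<lambda>h. g u \<bullet> h)) (at u)"
    and lip: "\<And>u v. norm (g u - g v) \<le> L * norm (u - v)"
  shows "f y \<le> f x + g x \<bullet> (y - x) + L / 2 * (norm (y - x))\<^sup>2"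
proof -
  define h where "h = y - x"
  define \<phi> where "\<phi> r = f (x + r *\<^sub>R h) - r * (g x \<bullet> h) - L / 2 * r\<^sup>2 * (norm h)\<^sup>2" for r
  have D: "(\<phi> has_real_derivative (g (x + r *\<^sub>R h) \<bullet> h - g x \<bullet> h - L * r * (norm h)\<^sup>2)) (at r)" for r
    unfolding \<phi>_def
    by (rule derivative_eq_intros line_deriv[OF d] refl | simp)+
  have "\<phi> 1 \<le> \<phi> 0"
  proof (rule DERIV_nonpos_imp_nonincreasing[of 0 1])
    fix r :: real assume r: "0 \<le> r" "r \<le> 1"
    have "g (x + r *\<^sub>R h) \<bullet> h - g x \<bullet> h = (g (x + r *\<^sub>R h) - g x) \<bullet> h"
      by (simp add: inner_diff_left)
    also have "\<dots> \<le> norm (g (x + r *\<^sub>R h) - g x) * norm h"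
      by (rule norm_cauchy_schwarz)
    also have "\<dots> \<le> (L * norm (r *\<^sub>R h)) * norm h"
      using lip[of "x + r *\<^sub>R h" x] by (intro mult_right_mono) auto
    also have "\<dots> = L * r * (norm h)\<^sup>2"
      using r by (simp add: power2_eq_square)
    finally show "\<exists>y. DERIV \<phi> r :> y \<and> y \<le> 0"
      using D by (intro exI[of _ "g (x + r *\<^sub>R h) \<bullet> h - g x \<bullet> h - L * r * (norm h)\<^sup>2"]) auto
  qed simp
  then show ?thesis unfolding \<phi>_def h_def by simp
qed

lemma tangent:
  fixes f :: "'v::real_inner \<Rightarrow> real"
  assumes d: "\<And>u. (f has_derivative (\<lambda>h. g u \<bullet> h)) (at u)"
    and cv: "convex_on UNIV f"
  shows "f y \<ge> f x + g x \<bullet> (y - x)"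
proof -
  define h where "h = y - x"
  have cv1: "convex_on UNIV (\<lambda>r. f (x + r *\<^sub>R h))"
  proof (rule convex_onI)
    fix u a b :: real
    assume uv: "0 < u" "u < 1"
    have "x + ((1 - u) *\<^sub>R a + u *\<^sub>R b) *\<^sub>R h = (1 - u) *\<^sub>R (x + a *\<^sub>R h) + u *\<^sub>R (x + b *\<^sub>R h)"
      by (simp add: algebra_simps)
    then show "f (x + ((1 - u) *\<^sub>R a + u *\<^sub>R b) *\<^sub>R h) \<le> (1 - u) * f (x + a *\<^sub>R h) + u * f (x + b *\<^sub>R h)"
      using convex_onD[OF cv, of u] uv by simp
  qed simp
  have "f (x + 1 *\<^sub>R h) - f (x + 0 *\<^sub>R h) \<ge> (g (x + 0 *\<^sub>R h) \<bullet> h) * (1 - 0)"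
    using line_deriv[OF d, where x=x and h=h and r=0]
    by (intro convex_on_imp_above_tangent[OF cv1]) (auto intro: has_field_derivative_at_within)
  then show ?thesis unfolding h_def by simp
qed

lemma norm_mult_norm: "norm v * norm v = v \<bullet> v"
  by (metis power2_eq_square power2_norm_eq_inner)

lemma cocoercive:
  fixes f :: "'v::real_inner \<Rightarrow> real"
  assumes d: "\<And>u. (f has_derivative (\<lambda>h. g u \<bullet> h)) (at u)"
    and cv: "convex_on UNIV f"
    and lip: "\<And>u v. norm (g u - g v) \<le> L * norm (u - v)"
    and L: "L > 0"
  shows "f y \<ge> f x + g x \<bullet> (y - x) + (norm (g y - g x))\<^sup>2 / (2 * L)"
proof -
  define \<phi> where "\<phi> u = f u - g x \<bullet> u" for u
  define g' where "g' u = g u - g x" for u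
  have d': "(\<phi> has_derivative (\<lambda>h. g' u \<bullet> h)) (at u)" for u
    unfolding \<phi>_def g'_def
    by (rule derivative_eq_intros d | simp add: inner_diff_left)+
  have cv': "convex_on UNIV \<phi>"
  proof (rule convex_onI)
    fix u :: real and a b :: 'v
    assume uv: "0 < u" "u < 1"
    show "\<phi> ((1 - u) *\<^sub>R a + u *\<^sub>R b) \<le> (1 - u) * \<phi> a + u * \<phi> b"
      using convex_onD[OF cv, of u a b] uv unfolding \<phi>_def
      by (simp add: inner_add_right algebra_simps)
  qed simp
  have lip': "norm (g' u - g' v) \<le> L * norm (u - v)" for u v
    unfolding g'_def using lip by simp
  have m: "\<phi> x \<le> \<phi> u" for u
    using tangent[OF d' cv', of x u] by (simp add: g'_def)
  define y' where "y' = y - (1 / L) *\<^sub>R g' y"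
  have "\<phi> y' \<le> \<phi> y + g' y \<bullet> (y' - y) + L / 2 * (norm (y' - y))\<^sup>2"
    by (rule descent[OF d' lip'])
  also have "\<dots> = \<phi> y - (norm (g' y))\<^sup>2 / (2 * L)"
    using L norm_mult_norm[of "g' y"] by (simp add: y'_def power2_norm_eq_inner inner_diff_right power2_eq_square field_simps)
  finally show ?thesis
    using m[of y'] unfolding \<phi>_def g'_def by (simp add: inner_diff_right)
qed



lemma young_gram:
  fixes A B Y e :: real
  assumes "A \<ge> 0" "B \<ge> 0" "Y\<^sup>2 \<le> A * B" "e > 0"
  shows "2 * Y \<le> e * A + B / e"
proof -
  have nn: "e * A + B / e \<ge> 0" using assms by simp
  have "(e * A + B / e)\<^sup>2 - 4 * (A * B) = (e * A - B / e)\<^sup>2"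
    using assms(4) by (simp add: power2_eq_square field_simps)
  moreover have "(2 * Y)\<^sup>2 = 4 * Y\<^sup>2" by (simp add: power2_eq_square)
  moreover have "0 \<le> (e * A - B / e)\<^sup>2" by simp
  ultimately have "(2 * Y)\<^sup>2 \<le> (e * A + B / e)\<^sup>2"
    using assms(3) by linarith
  then show ?thesis using nn by (rule power2_le_imp_le)
qed

lemma keyA:
  fixes D P \<sigma> Wn Q L :: real
  assumes D: "D > 0" and L: "L > 0"
    and h1: "Wn \<le> Q" and h2: "L * \<bar>\<sigma>\<bar> \<le> L * P - Q" and h3: "P\<^sup>2 \<le> D * Wn"
  shows "D * Wn - P\<^sup>2 \<le> (P + \<sigma>) * (L * D - (P + \<sigma>))"
proof -
  have DW: "D * Wn \<le> D * (L * P - L * \<bar>\<sigma>\<bar>)"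
    using h1 h2 D by (intro mult_left_mono) auto
  have e1: "P\<^sup>2 + D * L * \<bar>\<sigma>\<bar> \<le> D * L * P"
    using h3 DW by (simp add: algebra_simps)
  have DL: "D * L > 0" using D L by simp
  have P0: "P \<ge> 0"
  proof -
    have "0 \<le> D * L * P" using e1 DL by (smt (verit) zero_le_power2 mult_nonneg_nonneg abs_ge_zero)
    then show ?thesis using DL by (simp add: zero_le_mult_iff)
  qed
  have PL: "P \<le> D * L"
  proof (rule ccontr)
    assume "\<not> P \<le> D * L"
    then have "D * L * P < P * P" using P0 DL by (intro mult_strict_right_mono) auto
    then show False using e1 DL by (simp add: power2_eq_square) (smt (verit) mult_nonneg_nonneg abs_ge_zero)
  qed
  have main: "0 \<le> L * D * \<sigma> + L * D * \<bar>\<sigma>\<bar> - 2 * P * \<sigma> - \<sigma>\<^sup>2"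
  proof (cases "\<sigma> \<ge> 0")
    case True
    have "D * L * \<sigma> \<le> P * (D * L - P)" using e1 True by (simp add: power2_eq_square algebra_simps)
    also have "\<dots> \<le> D * L * (D * L - P)" using PL by (intro mult_right_mono) auto
    finally have "\<sigma> \<le> D * L - P" using DL by (metis mult_le_cancel_left_pos)
    then have "0 \<le> \<sigma> * (2 * L * D - 2 * P - \<sigma>)" using True PL by (intro mult_nonneg_nonneg) (auto simp: algebra_simps)
    then show ?thesis using True by (simp add: power2_eq_square algebra_simps)
  next
    case False
    have "D * L * (- \<sigma>) \<le> P * (D * L - P)" using e1 False by (simp add: power2_eq_square algebra_simps)
    also have "\<dots> \<le> P * (D * L)" using P0 by (intro mult_left_mono) auto
    finally have "D * L * (- \<sigma>) \<le> D * L * P" by (simp add: mult.commute)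
    then have "- \<sigma> \<le> P" using DL by (metis mult_le_cancel_left_pos)
    then have "0 \<le> (- \<sigma>) * (2 * P + \<sigma>)" using False by (intro mult_nonneg_nonneg) auto
    then show ?thesis using False by (simp add: power2_eq_square algebra_simps)
  qed
  have "D * Wn - P\<^sup>2 \<le> D * (L * P - L * \<bar>\<sigma>\<bar>) - P\<^sup>2" using DW by simp
  also have "\<dots> \<le> (P + \<sigma>) * (L * D - (P + \<sigma>))"
    using main by (simp add: power2_eq_square algebra_simps)
  finally show ?thesis .
qed

lemma core_scalar:
  fixes D P \<sigma> Wn Q Sn X L Lxy \<mu> t :: real
  assumes D: "D > 0" and L: "L > 0" and Lxy: "Lxy \<ge> 0" and mu: "\<mu> > 0" and t: "t > 0"
    and tb: "t * (L * \<mu> + 2 * Lxy * sqrt (\<mu> * (L - \<mu>)) + Lxy\<^sup>2) < 2 * \<mu>"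
    and h1: "Wn \<le> Q" and h2: "L * \<bar>\<sigma>\<bar> \<le> L * P - Q" and h3: "P\<^sup>2 \<le> D * Wn"
    and h4: "Sn \<le> Lxy\<^sup>2 * D" and h5: "\<sigma>\<^sup>2 \<le> D * Sn"
    and h6: "(D * X - P * \<sigma>)\<^sup>2 \<le> (D * Wn - P\<^sup>2) * (D * Sn - \<sigma>\<^sup>2)"
    and gr: "P + \<sigma> \<ge> \<mu> * D"
  shows "D - 2 * t * (P + \<sigma>) + t\<^sup>2 * (Wn + 2 * X + Sn)
     \<le> (t * (2 * t * Lxy * sqrt (\<mu> * (L - \<mu>)) + \<mu> * (L * t - 2) + t * Lxy\<^sup>2) + 1) * D"
proof -
  define \<Phi> where "\<Phi> = P + \<sigma>"
  define A where "A = D * Wn - P\<^sup>2"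
  define B where "B = D * Sn - \<sigma>\<^sup>2"
  define Y where "Y = D * X - P * \<sigma>"
  define c where "c = sqrt (\<mu> * (L - \<mu>))"
  have eq1: "D * (Wn + 2 * X + Sn) = \<Phi>\<^sup>2 + A + 2 * Y + B"
    unfolding \<Phi>_def A_def B_def Y_def by (simp add: power2_eq_square algebra_simps)
  have A0: "A \<ge> 0" using h3 unfolding A_def by simp
  have B0: "B \<ge> 0" using h5 unfolding B_def by simp
  have BL: "B \<le> Lxy\<^sup>2 * D\<^sup>2"
  proof -
    have "D * Sn \<le> D * (Lxy\<^sup>2 * D)" using h4 D by (intro mult_left_mono) auto
    then have "D * Sn \<le> Lxy\<^sup>2 * D\<^sup>2" by (simp add: power2_eq_square algebra_simps)
    moreover have "0 \<le> \<sigma>\<^sup>2" by simp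
    ultimately show ?thesis unfolding B_def by linarith
  qed
  have YAB: "Y\<^sup>2 \<le> A * B" using h6 unfolding Y_def A_def B_def .
  have kA: "A \<le> \<Phi> * (L * D - \<Phi>)"
    unfolding A_def \<Phi>_def by (rule keyA[OF D L h1 h2 h3])
  have Phi_mu: "\<Phi> \<ge> \<mu> * D" using gr unfolding \<Phi>_def .
  have Phipos: "\<Phi> > 0" using Phi_mu mu D by (smt (verit) mult_pos_pos)
  have PhiL: "\<Phi> \<le> L * D"
  proof -
    have "0 \<le> \<Phi> * (L * D - \<Phi>)" using A0 kA by linarith
    then show ?thesis using Phipos by (simp add: zero_le_mult_iff)
  qed
  have muL: "\<mu> \<le> L"
  proof -
    have "\<mu> * D \<le> L * D" using Phi_mu PhiL by linarith
    then show ?thesis using D by simp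
  qed
  have alpha: "(t * (2 * t * Lxy * c + \<mu> * (L * t - 2) + t * Lxy\<^sup>2) + 1) * D * D
      = D\<^sup>2 - 2 * t * \<mu> * D\<^sup>2 + t\<^sup>2 * (L * \<mu> + 2 * Lxy * c + Lxy\<^sup>2) * D\<^sup>2"
    by (simp add: power2_eq_square algebra_simps)
  have lhsD: "(D - 2 * t * (P + \<sigma>) + t\<^sup>2 * (Wn + 2 * X + Sn)) * D
      = D\<^sup>2 - 2 * t * \<Phi> * D + t\<^sup>2 * (\<Phi>\<^sup>2 + A + 2 * Y + B)"
    unfolding \<Phi>_def A_def B_def Y_def by (simp add: power2_eq_square algebra_simps)
  have main: "D\<^sup>2 - 2 * t * \<Phi> * D + t\<^sup>2 * (\<Phi>\<^sup>2 + A + 2 * Y + B)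
      \<le> D\<^sup>2 - 2 * t * \<mu> * D\<^sup>2 + t\<^sup>2 * (L * \<mu> + 2 * Lxy * c + Lxy\<^sup>2) * D\<^sup>2"
  proof (cases "c > 0")
    case False
    have nn: "0 \<le> \<mu> * (L - \<mu>)" using muL mu by simp
    have "\<not> 0 < \<mu> * (L - \<mu>)" using False unfolding c_def by simp
    then have pz: "\<mu> * (L - \<mu>) = 0" using nn by linarith
    then have c0: "c = 0" unfolding c_def by simp
    have muL': "\<mu> = L" using pz mu by simp
    then have PhiLD: "\<Phi> = L * D" using Phi_mu PhiL by simp
    then have "A = 0" using kA A0 by simp
    then have "Y = 0" using YAB by simp
    have "\<Phi>\<^sup>2 + A + 2 * Y + B \<le> L\<^sup>2 * D\<^sup>2 + Lxy\<^sup>2 * D\<^sup>2"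
      using \<open>A = 0\<close> \<open>Y = 0\<close> BL PhiLD by (simp add: power_mult_distrib)
    then have "t\<^sup>2 * (\<Phi>\<^sup>2 + A + 2 * Y + B) \<le> t\<^sup>2 * (L\<^sup>2 * D\<^sup>2 + Lxy\<^sup>2 * D\<^sup>2)"
      by (intro mult_left_mono) auto
    then show ?thesis using c0 muL' PhiLD by (simp add: power2_eq_square algebra_simps)
  next
    case True
    have cc: "c\<^sup>2 = \<mu> * (L - \<mu>)" unfolding c_def using muL mu by simp
    have Y2: "2 * Y \<le> (Lxy / c) * A + c * Lxy * D\<^sup>2"
    proof (cases "Lxy > 0")
      case True
      have "2 * Y \<le> (Lxy / c) * A + B / (Lxy / c)"
        using young_gram[OF A0 B0 YAB, of "Lxy / c"] True \<open>c > 0\<close> by simp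
      also have "B / (Lxy / c) \<le> (Lxy\<^sup>2 * D\<^sup>2) / (Lxy / c)"
        using BL True \<open>c > 0\<close> by (intro divide_right_mono) auto
      also have "(Lxy\<^sup>2 * D\<^sup>2) / (Lxy / c) = c * Lxy * D\<^sup>2"
        using True by (simp add: power2_eq_square field_simps)
      finally show ?thesis by simp
    next
      case False
      then have "Lxy = 0" using Lxy by simp
      then have "B = 0" using BL B0 by simp
      then have "Y = 0" using YAB by simp
      then show ?thesis using \<open>Lxy = 0\<close> by simp
    qed
    have s1: "\<Phi>\<^sup>2 + A + 2 * Y + B \<le> \<Phi>\<^sup>2 + (1 + Lxy / c) * (\<Phi> * (L * D - \<Phi>)) + c * Lxy * D\<^sup>2 + Lxy\<^sup>2 * D\<^sup>2"
    proof -
      have "(1 + Lxy / c) * A \<le> (1 + Lxy / c) * (\<Phi> * (L * D - \<Phi>))"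
        using kA True Lxy by (intro mult_left_mono) auto
      then show ?thesis using Y2 BL by (simp add: algebra_simps)
    qed
    have brk: "-2 * D + t * L * D + t * (Lxy / c) * (L * D - \<Phi> - \<mu> * D) \<le> 0"
    proof -
      have a1: "t * (Lxy / c) * (L * D - \<Phi> - \<mu> * D) \<le> t * (Lxy / c) * ((L - 2 * \<mu>) * D)"
        using Phi_mu t Lxy True by (intro mult_left_mono) (auto simp: algebra_simps)
      have a2: "t * (L * \<mu> * c + Lxy * (\<mu> * (L - 2 * \<mu>))) \<le> 2 * \<mu> * c"
      proof -
        have "t * (L * \<mu> + 2 * Lxy * c + Lxy\<^sup>2) * c \<le> 2 * \<mu> * c"
          using tb True unfolding c_def by (intro mult_right_mono) auto
        moreover have "Lxy * (\<mu> * (L - 2 * \<mu>)) \<le> 2 * Lxy * c * c + Lxy\<^sup>2 * c"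
        proof -
          have "Lxy * (\<mu> * (L - 2 * \<mu>)) \<le> Lxy * (2 * (c * c))"
            using Lxy mu cc mult_pos_pos[OF L mu] by (intro mult_left_mono) (auto simp: power2_eq_square algebra_simps)
          moreover have "0 \<le> Lxy\<^sup>2 * c" using True by simp
          ultimately show ?thesis by (simp add: algebra_simps)
        qed
        ultimately show ?thesis using t
          by (smt (verit, ccfv_SIG) mult_left_mono distrib_left mult.commute mult.left_commute)
      qed
      have a3: "-2 + t * L + t * (Lxy / c) * (L - 2 * \<mu>) \<le> 0"
      proof -
        have "(-2 + t * L + t * (Lxy / c) * (L - 2 * \<mu>)) * (\<mu> * c)
            = t * (L * \<mu> * c + Lxy * (\<mu> * (L - 2 * \<mu>))) - 2 * \<mu> * c"
          using True by (simp add: field_simps)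
        also have "\<dots> \<le> 0" using a2 by simp
        finally show ?thesis using mu True by (simp add: mult_le_0_iff)
      qed
      have "-2 * D + t * L * D + t * (Lxy / c) * (L * D - \<Phi> - \<mu> * D)
          \<le> -2 * D + t * L * D + t * (Lxy / c) * ((L - 2 * \<mu>) * D)" using a1 by simp
      also have "\<dots> = (-2 + t * L + t * (Lxy / c) * (L - 2 * \<mu>)) * D" by (simp add: algebra_simps)
      also have "\<dots> \<le> 0" using a3 D by (simp add: mult_le_0_iff)
      finally show ?thesis .
    qed
    have diff: "(D\<^sup>2 - 2 * t * \<Phi> * D + t\<^sup>2 * (\<Phi>\<^sup>2 + (1 + Lxy / c) * (\<Phi> * (L * D - \<Phi>)) + c * Lxy * D\<^sup>2 + Lxy\<^sup>2 * D\<^sup>2))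
        - (D\<^sup>2 - 2 * t * \<mu> * D\<^sup>2 + t\<^sup>2 * (L * \<mu> + 2 * Lxy * c + Lxy\<^sup>2) * D\<^sup>2)
        = t * (\<Phi> - \<mu> * D) * (-2 * D + t * L * D + t * (Lxy / c) * (L * D - \<Phi> - \<mu> * D))"
      using True cc by (simp add: power2_eq_square field_simps) algebra
    have "t * (\<Phi> - \<mu> * D) * (-2 * D + t * L * D + t * (Lxy / c) * (L * D - \<Phi> - \<mu> * D)) \<le> 0"
      using brk t Phi_mu by (simp add: mult_le_0_iff)
    then have "D\<^sup>2 - 2 * t * \<Phi> * D + t\<^sup>2 * (\<Phi>\<^sup>2 + (1 + Lxy / c) * (\<Phi> * (L * D - \<Phi>)) + c * Lxy * D\<^sup>2 + Lxy\<^sup>2 * D\<^sup>2)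
        \<le> D\<^sup>2 - 2 * t * \<mu> * D\<^sup>2 + t\<^sup>2 * (L * \<mu> + 2 * Lxy * c + Lxy\<^sup>2) * D\<^sup>2"
      using diff by linarith
    moreover have "t\<^sup>2 * (\<Phi>\<^sup>2 + A + 2 * Y + B) \<le> t\<^sup>2 * (\<Phi>\<^sup>2 + (1 + Lxy / c) * (\<Phi> * (L * D - \<Phi>)) + c * Lxy * D\<^sup>2 + Lxy\<^sup>2 * D\<^sup>2)"
      using s1 by (intro mult_left_mono) auto
    ultimately show ?thesis by linarith
  qed
  have "(D - 2 * t * (P + \<sigma>) + t\<^sup>2 * (Wn + 2 * X + Sn)) * D
      \<le> (t * (2 * t * Lxy * c + \<mu> * (L * t - 2) + t * Lxy\<^sup>2) + 1) * D * D"
    using lhsD main alpha by linarith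
  then show ?thesis using D unfolding c_def by simp
qed

lemma normsq_pair: "(norm (a, b))\<^sup>2 = (norm a)\<^sup>2 + (norm b)\<^sup>2"
  by (simp add: norm_prod_def)

lemma proj_cs:
  fixes u v d :: "'v::real_inner"
  assumes D: "d \<bullet> d > 0"
  shows "((d \<bullet> d) * (u \<bullet> v) - (u \<bullet> d) * (v \<bullet> d))\<^sup>2
      \<le> ((d \<bullet> d) * (u \<bullet> u) - (u \<bullet> d)\<^sup>2) * ((d \<bullet> d) * (v \<bullet> v) - (v \<bullet> d)\<^sup>2)"
proof -
  define D where "D = d \<bullet> d"
  define u' where "u' = D *\<^sub>R u - (u \<bullet> d) *\<^sub>R d"
  define v' where "v' = D *\<^sub>R v - (v \<bullet> d) *\<^sub>R d"
  have uv: "u' \<bullet> v' = D * (D * (u \<bullet> v) - (u \<bullet> d) * (v \<bullet> d))"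
    unfolding u'_def v'_def D_def by (simp add: inner_diff_left inner_diff_right inner_commute algebra_simps)
  have uu: "u' \<bullet> u' = D * (D * (u \<bullet> u) - (u \<bullet> d)\<^sup>2)"
    unfolding u'_def D_def by (simp add: inner_diff_left inner_diff_right inner_commute power2_eq_square algebra_simps)
  have vv: "v' \<bullet> v' = D * (D * (v \<bullet> v) - (v \<bullet> d)\<^sup>2)"
    unfolding v'_def D_def by (simp add: inner_diff_left inner_diff_right inner_commute power2_eq_square algebra_simps)
  have "(u' \<bullet> v')\<^sup>2 \<le> (u' \<bullet> u') * (v' \<bullet> v')"
  proof -
    have "\<bar>u' \<bullet> v'\<bar> \<le> norm u' * norm v'" by (rule Cauchy_Schwarz_ineq2)
    then have "\<bar>u' \<bullet> v'\<bar>\<^sup>2 \<le> (norm u' * norm v')\<^sup>2" by (intro power_mono) auto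
    then show ?thesis by (simp add: power_mult_distrib power2_norm_eq_inner)
  qed
  moreover have "(u' \<bullet> v')\<^sup>2 = D\<^sup>2 * (D * (u \<bullet> v) - (u \<bullet> d) * (v \<bullet> d))\<^sup>2"
    unfolding uv by (simp add: power_mult_distrib)
  moreover have "(u' \<bullet> u') * (v' \<bullet> v') = D\<^sup>2 * ((D * (u \<bullet> u) - (u \<bullet> d)\<^sup>2) * (D * (v \<bullet> v) - (v \<bullet> d)\<^sup>2))"
    unfolding uu vv by (simp add: power2_eq_square algebra_simps)
  ultimately have "D\<^sup>2 * (D * (u \<bullet> v) - (u \<bullet> d) * (v \<bullet> d))\<^sup>2
      \<le> D\<^sup>2 * ((D * (u \<bullet> u) - (u \<bullet> d)\<^sup>2) * (D * (v \<bullet> v) - (v \<bullet> d)\<^sup>2))"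
    by simp
  moreover have "D\<^sup>2 > 0" using D unfolding D_def by simp
  ultimately show ?thesis unfolding D_def by (metis mult_le_cancel_left_pos)
qed

lemma cs_sq:
  fixes u d :: "'v::real_inner"
  shows "(u \<bullet> d)\<^sup>2 \<le> (d \<bullet> d) * (u \<bullet> u)"
proof -
  have "\<bar>u \<bullet> d\<bar> \<le> norm u * norm d" by (rule Cauchy_Schwarz_ineq2)
  then have "\<bar>u \<bullet> d\<bar>\<^sup>2 \<le> (norm u * norm d)\<^sup>2" by (intro power_mono) auto
  then show ?thesis by (simp add: power_mult_distrib power2_norm_eq_inner mult.commute)
qed

lemma four_point:
  fixes hx gx bx cx :: "'a::real_inner" and hy gy bY cy :: "'b::real_inner"
    and FA FB FC FD L Lxy \<mu> t :: real
  assumes L: "L > 0" and Lxy: "Lxy \<ge> 0" and mu: "\<mu> > 0" and t: "t > 0"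
    and tb: "t * (L * \<mu> + 2 * Lxy * sqrt (\<mu> * (L - \<mu>)) + Lxy\<^sup>2) < 2 * \<mu>"
    and D: "(norm hx)\<^sup>2 + (norm hy)\<^sup>2 > 0"
    and i1: "FB \<ge> FA + (norm bx)\<^sup>2 / (2 * L)"
    and i2: "FA \<ge> FB - bx \<bullet> hx + (norm bx)\<^sup>2 / (2 * L)"
    and i3: "FD \<ge> FC + cx \<bullet> hx + (norm (gx - cx))\<^sup>2 / (2 * L)"
    and i4: "FC \<ge> FD - gx \<bullet> hx + (norm (gx - cx))\<^sup>2 / (2 * L)"
    and j1: "FC \<le> FA - (norm cy)\<^sup>2 / (2 * L)"
    and j2: "FA \<le> FC - cy \<bullet> hy - (norm cy)\<^sup>2 / (2 * L)"
    and j3: "FD \<le> FB + bY \<bullet> hy - (norm (gy - bY))\<^sup>2 / (2 * L)"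
    and j4: "FB \<le> FD - gy \<bullet> hy - (norm (gy - bY))\<^sup>2 / (2 * L)"
    and k1: "norm cx \<le> Lxy * norm hy" and k2: "norm (gx - bx) \<le> Lxy * norm hy"
    and k3: "norm bY \<le> Lxy * norm hx" and k4: "norm (gy - cy) \<le> Lxy * norm hx"
    and gr: "gx \<bullet> hx - gy \<bullet> hy \<ge> \<mu> * ((norm hx)\<^sup>2 + (norm hy)\<^sup>2)"
  shows "(norm (hx - t *\<^sub>R gx))\<^sup>2 + (norm (hy + t *\<^sub>R gy))\<^sup>2
    \<le> (t * (2 * t * Lxy * sqrt (\<mu> * (L - \<mu>)) + \<mu> * (L * t - 2) + t * Lxy\<^sup>2) + 1)
       * ((norm hx)\<^sup>2 + (norm hy)\<^sup>2)"
proof -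
  define d where "d = (hx, hy)"
  define w1 where "w1 = (gx - cx, bY - gy)"
  define w2 where "w2 = (bx, - cy)"
  define s1 where "s1 = (cx, - bY)"
  define s2 where "s2 = (gx - bx, cy - gy)"
  define w where "w = (1/2) *\<^sub>R (w1 + w2)"
  define s where "s = (1/2) *\<^sub>R (s1 + s2)"
  define DD where "DD = (norm hx)\<^sup>2 + (norm hy)\<^sup>2"
  have dd: "d \<bullet> d = DD" unfolding d_def DD_def by (simp add: power2_norm_eq_inner)
  have ws: "w + s = (gx, - gy)"
  proof -
    have "w + s = (1/2) *\<^sub>R ((w1 + w2) + (s1 + s2))" unfolding w_def s_def by (simp add: scaleR_add_right)
    also have "(w1 + w2) + (s1 + s2) = (2 *\<^sub>R gx, - (2 *\<^sub>R gy))"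
      unfolding w1_def w2_def s1_def s2_def by (simp add: scaleR_2 algebra_simps)
    finally show ?thesis by simp
  qed
  have lhs: "(norm (hx - t *\<^sub>R gx))\<^sup>2 + (norm (hy + t *\<^sub>R gy))\<^sup>2
      = DD - 2 * t * (w \<bullet> d + s \<bullet> d) + t\<^sup>2 * (w \<bullet> w + 2 * (w \<bullet> s) + s \<bullet> s)"
  proof -
    have "(norm (hx - t *\<^sub>R gx))\<^sup>2 + (norm (hy + t *\<^sub>R gy))\<^sup>2 = (norm (d - t *\<^sub>R (w + s)))\<^sup>2"
      unfolding ws d_def by (simp add: normsq_pair)
    also have "\<dots> = (d - t *\<^sub>R (w + s)) \<bullet> (d - t *\<^sub>R (w + s))" by (simp add: power2_norm_eq_inner)
    also have "\<dots> = DD - 2 * t * (w \<bullet> d + s \<bullet> d) + t\<^sup>2 * (w \<bullet> w + 2 * (w \<bullet> s) + s \<bullet> s)"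
      using dd by (simp add: inner_diff_left inner_diff_right inner_add_left inner_add_right inner_commute power2_eq_square algebra_simps)
    finally show ?thesis .
  qed
  have g2: "w \<bullet> d + s \<bullet> d = gx \<bullet> hx - gy \<bullet> hy"
    using ws by (metis inner_add_left inner_Pair d_def inner_minus_left diff_conv_add_uminus)
  have h1: "w \<bullet> w \<le> ((w1 \<bullet> w1) + (w2 \<bullet> w2)) / 2"
  proof -
    have "0 \<le> (w1 - w2) \<bullet> (w1 - w2)" by simp
    then show ?thesis unfolding w_def by (simp add: inner_add_left inner_add_right inner_diff_left inner_diff_right inner_commute algebra_simps)
  qed
  define q1 where "q1 = (norm bx)\<^sup>2 / (2 * L)"
  define q2 where "q2 = (norm (gx - cx))\<^sup>2 / (2 * L)"
  define q3 where "q3 = (norm cy)\<^sup>2 / (2 * L)"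
  define q4 where "q4 = (norm (gy - bY))\<^sup>2 / (2 * L)"
  have Pw: "w \<bullet> d = ((gx \<bullet> hx - cx \<bullet> hx) + (bY \<bullet> hy - gy \<bullet> hy) + bx \<bullet> hx - cy \<bullet> hy) / 2"
    unfolding w_def w1_def w2_def d_def by (simp add: inner_diff_left inner_add_left algebra_simps)
  have Ps: "s \<bullet> d = (cx \<bullet> hx - bY \<bullet> hy + (gx \<bullet> hx - bx \<bullet> hx) + (cy \<bullet> hy - gy \<bullet> hy)) / 2"
    unfolding s_def s1_def s2_def d_def by (simp add: inner_diff_left inner_add_left algebra_simps)
  have sig: "\<bar>s \<bullet> d\<bar> \<le> w \<bullet> d - (q1 + q2 + q3 + q4)"
  proof -
    note ii = i1[folded q1_def] i2[folded q1_def] i3[folded q2_def] i4[folded q2_def]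
      j1[folded q3_def] j2[folded q3_def] j3[folded q4_def] j4[folded q4_def]
    have u0: "cx \<bullet> hx - bY \<bullet> hy - bx \<bullet> hx + cy \<bullet> hy \<le> - (q1 + q2 + q3 + q4)"
      using ii by linarith
    have l0: "gx \<bullet> hx - gy \<bullet> hy \<ge> q1 + q2 + q3 + q4"
      using ii by linarith
    have u: "s \<bullet> d \<le> w \<bullet> d - (q1 + q2 + q3 + q4)"
      using u0 unfolding Pw Ps by (simp add: field_simps)
    have l: "- (s \<bullet> d) \<le> w \<bullet> d - (q1 + q2 + q3 + q4)"
      using l0 unfolding Pw Ps by (simp add: field_simps)
    show ?thesis using u l by linarith
  qed
  have Qeq: "L * (q1 + q2 + q3 + q4) = ((w1 \<bullet> w1) + (w2 \<bullet> w2)) / 2"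
  proof -
    have "(w1 \<bullet> w1) + (w2 \<bullet> w2) = (norm (gx - cx))\<^sup>2 + (norm (gy - bY))\<^sup>2 + (norm bx)\<^sup>2 + (norm cy)\<^sup>2"
      unfolding w1_def w2_def by (simp add: power2_norm_eq_inner inner_diff_left inner_diff_right inner_commute algebra_simps)
    then show ?thesis unfolding q1_def q2_def q3_def q4_def using L by (simp add: field_simps)
  qed
  have h2: "L * \<bar>s \<bullet> d\<bar> \<le> L * (w \<bullet> d) - ((w1 \<bullet> w1) + (w2 \<bullet> w2)) / 2"
  proof -
    have "L * \<bar>s \<bullet> d\<bar> \<le> L * (w \<bullet> d - (q1 + q2 + q3 + q4))" using sig L by (intro mult_left_mono) auto
    then show ?thesis using Qeq right_diff_distrib[of L "w \<bullet> d" "q1 + q2 + q3 + q4"] by linarith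
  qed
  have h3: "(w \<bullet> d)\<^sup>2 \<le> DD * (w \<bullet> w)" using cs_sq[of w d] dd by simp
  have h5: "(s \<bullet> d)\<^sup>2 \<le> DD * (s \<bullet> s)" using cs_sq[of s d] dd by simp
  have h6: "(DD * (w \<bullet> s) - (w \<bullet> d) * (s \<bullet> d))\<^sup>2
      \<le> (DD * (w \<bullet> w) - (w \<bullet> d)\<^sup>2) * (DD * (s \<bullet> s) - (s \<bullet> d)\<^sup>2)"
    using proj_cs[of d w s] dd D unfolding DD_def by simp
  have h4: "s \<bullet> s \<le> Lxy\<^sup>2 * DD"
  proof -
    have sx: "norm ((1/2) *\<^sub>R (cx + (gx - bx))) \<le> Lxy * norm hy"
    proof -
      have "norm ((1/2) *\<^sub>R (cx + (gx - bx))) \<le> (1/2) * (norm cx + norm (gx - bx))"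
        using norm_triangle_ineq[of cx "gx - bx"] by simp
      then show ?thesis using k1 k2 by simp
    qed
    have sy: "norm ((1/2) *\<^sub>R (- bY + (cy - gy))) \<le> Lxy * norm hx"
    proof -
      have "norm ((1/2) *\<^sub>R (- bY + (cy - gy))) \<le> (1/2) * (norm bY + norm (gy - cy))"
        using norm_triangle_ineq[of "- bY" "cy - gy"] norm_minus_commute[of cy gy] by simp
      then show ?thesis using k3 k4 by simp
    qed
    have "s = ((1/2) *\<^sub>R (cx + (gx - bx)), (1/2) *\<^sub>R (- bY + (cy - gy)))"
      unfolding s_def s1_def s2_def by simp
    then have "s \<bullet> s = (norm ((1/2) *\<^sub>R (cx + (gx - bx))))\<^sup>2 + (norm ((1/2) *\<^sub>R (- bY + (cy - gy))))\<^sup>2"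
      by (metis inner_Pair power2_norm_eq_inner)
    also have "\<dots> \<le> (Lxy * norm hy)\<^sup>2 + (Lxy * norm hx)\<^sup>2"
      using sx sy by (intro add_mono power_mono) auto
    also have "\<dots> = Lxy\<^sup>2 * DD" unfolding DD_def by (simp add: power_mult_distrib algebra_simps)
    finally show ?thesis .
  qed
  have grr: "w \<bullet> d + s \<bullet> d \<ge> \<mu> * DD" using gr g2 unfolding DD_def by simp
  have "DD - 2 * t * (w \<bullet> d + s \<bullet> d) + t\<^sup>2 * (w \<bullet> w + 2 * (w \<bullet> s) + s \<bullet> s)
     \<le> (t * (2 * t * Lxy * sqrt (\<mu> * (L - \<mu>)) + \<mu> * (L * t - 2) + t * Lxy\<^sup>2) + 1) * DD"
    by (rule core_scalar[OF _ L Lxy mu t tb h1 h2 h3 h4 h5 h6 grr]) (use D DD_def in simp)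
  then show ?thesis using lhs unfolding DD_def by simp
qed


theorem theorem3p3:
  fixes F :: "'a::euclidean_space \<Rightarrow> 'b::euclidean_space \<Rightarrow> real"
    and Gx :: "'a \<Rightarrow> 'b \<Rightarrow> 'a" and Gy :: "'a \<Rightarrow> 'b \<Rightarrow> 'b"
    and Lx Ly Lxy \<mu> t :: real and x1 :: 'a and y1 :: 'b
  assumes "Lx > 0" "Ly > 0" "Lxy \<ge> 0"
    and "smooth_convex_concave Lx Ly Lxy F Gx Gy"
    and "saddle_points F \<noteq> {}"
    and "quadratic_gradient_growth F Gx Gy \<mu>"
    and "t > 0"
    and "t < 2 * \<mu> / (max Lx Ly * \<mu> + 2 * Lxy * sqrt (\<mu> * (max Lx Ly - \<mu>)) + Lxy\<^sup>2)"
  shows "(infdist (x1 - t *\<^sub>R Gx x1 y1, y1 + t *\<^sub>R Gy x1 y1) (saddle_points F))\<^sup>2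
         \<le> (t * (2 * t * Lxy * sqrt (\<mu> * (max Lx Ly - \<mu>)) + \<mu> * (max Lx Ly * t - 2) + t * Lxy\<^sup>2) + 1)
           * (infdist (x1, y1) (saddle_points F))\<^sup>2"
proof -
  note scc = assms(4)[unfolded smooth_convex_concave_def partial_gradients_def]
  define L where "L = max Lx Ly"
  define S where "S = saddle_points F"
  define K where "K = L * \<mu> + 2 * Lxy * sqrt (\<mu> * (L - \<mu>)) + Lxy\<^sup>2"
  have L: "L > 0" using assms(1) unfolding L_def by simp
  have mu: "\<mu> > 0" using assms(6) unfolding quadratic_gradient_growth_def by simp
  have t: "t > 0" by (rule assms(7))
  have Lxy: "Lxy \<ge> 0" by (rule assms(3))
  have tb: "t * K < 2 * \<mu>"
  proof -
    have tl: "t < 2 * \<mu> / K" using assms(8) unfolding K_def L_def .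
    have "K > 0"
    proof (rule ccontr)
      assume "\<not> K > 0"
      then have "2 * \<mu> / K \<le> 0" using mu by (simp add: divide_nonneg_nonpos)
      then show False using tl t by linarith
    qed
    then show ?thesis using tl by (simp add: pos_less_divide_eq mult.commute)
  qed
  have c_diff: "\<forall>p. (\<lambda>(x, y). F x y) differentiable (at p)" using scc by (rule conjunct1)
  have c_dx: "\<forall>x y. ((\<lambda>u. F u y) has_derivative (\<lambda>h. Gx x y \<bullet> h)) (at x)"
    using scc by (rule conjunct2[THEN conjunct1, THEN conjunct1])
  have c_dy: "\<forall>x y. ((\<lambda>v. F x v) has_derivative (\<lambda>h. Gy x y \<bullet> h)) (at y)"
    using scc by (rule conjunct2[THEN conjunct1, THEN conjunct2])
  have c_cvx: "\<forall>y. convex_on UNIV (\<lambda>x. F x y)"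
    using scc by (rule conjunct2[THEN conjunct2, THEN conjunct1])
  have c_ccv: "\<forall>x. concave_on UNIV (\<lambda>y. F x y)"
    using scc by (rule conjunct2[THEN conjunct2, THEN conjunct2, THEN conjunct1])
  have c_lx: "\<forall>x1 x2 y. norm (Gx x2 y - Gx x1 y) \<le> Lx * norm (x2 - x1)"
    using scc by (rule conjunct2[THEN conjunct2, THEN conjunct2, THEN conjunct2, THEN conjunct1])
  have c_ly: "\<forall>x y1 y2. norm (Gy x y2 - Gy x y1) \<le> Ly * norm (y2 - y1)"
    using scc by (rule conjunct2[THEN conjunct2, THEN conjunct2, THEN conjunct2, THEN conjunct2, THEN conjunct1])
  have c_lxy1: "\<forall>x y1 y2. norm (Gx x y2 - Gx x y1) \<le> Lxy * norm (y2 - y1)"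
    using scc by (rule conjunct2[THEN conjunct2, THEN conjunct2, THEN conjunct2, THEN conjunct2, THEN conjunct2, THEN conjunct1])
  have c_lxy2: "\<forall>x1 x2 y. norm (Gy x2 y - Gy x1 y) \<le> Lxy * norm (x2 - x1)"
    using scc by (rule conjunct2[THEN conjunct2, THEN conjunct2, THEN conjunct2, THEN conjunct2, THEN conjunct2, THEN conjunct2])
  have dx: "\<And>x y. ((\<lambda>u. F u y) has_derivative (\<lambda>h. Gx x y \<bullet> h)) (at x)" using c_dx by blast
  have dy: "\<And>x y. ((\<lambda>v. F x v) has_derivative (\<lambda>h. Gy x y \<bullet> h)) (at y)" using c_dy by blast
  have cvx: "\<And>y. convex_on UNIV (\<lambda>x. F x y)" using c_cvx by blast
  have ccv: "\<And>x. concave_on UNIV (\<lambda>y. F x y)" using c_ccv by blast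
  have lx: "norm (Gx ab y - Gx aa y) \<le> Lx * norm (ab - aa)" for aa ab y using c_lx by blast
  have ly: "norm (Gy x bb - Gy x ba) \<le> Ly * norm (bb - ba)" for x ba bb using c_ly by blast
  have lxy1: "norm (Gx x bb - Gx x ba) \<le> Lxy * norm (bb - ba)" for x ba bb using c_lxy1 by blast
  have lxy2: "norm (Gy ab y - Gy aa y) \<le> Lxy * norm (ab - aa)" for aa ab y using c_lxy2 by blast
  have lxL: "norm (Gx u y - Gx v y) \<le> L * norm (u - v)" for u v y
    using lx[where aa=v and ab=u and y=y] mult_right_mono[of Lx L "norm (u - v)"] unfolding L_def by auto
  have lyL: "norm ((- Gy x u) - (- Gy x v)) \<le> L * norm (u - v)" for u v x
  proof -
    have "norm ((- Gy x u) - (- Gy x v)) = norm (Gy x u - Gy x v)" by (simp add: norm_minus_commute)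
    then show ?thesis using ly[where x=x and ba=v and bb=u] mult_right_mono[of Ly L "norm (u - v)"] unfolding L_def by auto
  qed
  have dyn: "((\<lambda>v. - F x v) has_derivative (\<lambda>h. (- Gy x y) \<bullet> h)) (at y)" for x y
    using has_derivative_minus[OF dy[of x y]] by simp
  have cvy: "convex_on UNIV (\<lambda>v. - F x v)" for x using ccv[of x] unfolding concave_on_def .
  have cocx: "F b y \<ge> F a y + Gx a y \<bullet> (b - a) + (norm (Gx b y - Gx a y))\<^sup>2 / (2 * L)" for a b y
    by (rule cocoercive[where f="\<lambda>u. F u y" and g="\<lambda>u. Gx u y", OF dx cvx[of y] lxL L])
  have cocy: "- F x b \<ge> - F x a + (- Gy x a) \<bullet> (b - a) + (norm ((- Gy x b) - (- Gy x a)))\<^sup>2 / (2 * L)" for a b x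
    by (rule cocoercive[where f="\<lambda>v. - F x v" and g="\<lambda>v. - Gy x v", OF dyn cvy[of x] lyL L])
  define H where "H = (\<lambda>q::'a \<times> 'b. case q of (x, y) \<Rightarrow> F x y)"
  have cH: "continuous_on UNIV H"
    unfolding H_def using c_diff
    by (intro differentiable_imp_continuous_on differentiable_at_imp_differentiable_on) auto
  have c1: "continuous_on UNIV (\<lambda>p::'a \<times> 'b. F (fst p) y)" for y
  proof -
    have "continuous_on UNIV (\<lambda>p::'a \<times> 'b. H (fst p, y))"
      by (rule continuous_on_compose2[OF cH]) (auto intro!: continuous_intros)
    then show ?thesis unfolding H_def by simp
  qed
  have c2: "continuous_on UNIV (\<lambda>p::'a \<times> 'b. F x (snd p))" for x
  proof -
    have "continuous_on UNIV (\<lambda>p::'a \<times> 'b. H (x, snd p))"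
      by (rule continuous_on_compose2[OF cH]) (auto intro!: continuous_intros)
    then show ?thesis unfolding H_def by simp
  qed
  have c3: "continuous_on UNIV (\<lambda>p::'a \<times> 'b. F (fst p) (snd p))"
  proof -
    have "(\<lambda>p::'a \<times> 'b. F (fst p) (snd p)) = H" unfolding H_def by (auto simp: split_beta)
    then show ?thesis using cH by metis
  qed
  have Seq: "S = (\<Inter>y. {p. F (fst p) y \<le> F (fst p) (snd p)}) \<inter> (\<Inter>x. {p. F (fst p) (snd p) \<le> F x (snd p)})"
    unfolding S_def saddle_points_def by auto
  have closedS: "closed S"
    unfolding Seq
    by (intro closed_Int closed_INT ballI closed_Collect_le c1 c2 c3)
  have Sne: "S \<noteq> {}" using assms(5) unfolding S_def .
  define p where "p = closest_point S (x1, y1)"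
  define xs where "xs = fst p"
  define ys where "ys = snd p"
  have pS: "p \<in> S" unfolding p_def by (rule closest_point_exists(1)[OF closedS Sne])
  have pxy: "p = (xs, ys)" unfolding xs_def ys_def by simp
  have sad: "F xs y \<le> F xs ys" "F xs ys \<le> F x ys" for x y
    using pS unfolding pxy S_def saddle_points_def by auto
  have infd: "infdist (x1, y1) S = dist (x1, y1) p"
  proof (rule antisym)
    show "infdist (x1, y1) S \<le> dist (x1, y1) p" by (rule infdist_le[OF pS])
    show "dist (x1, y1) p \<le> infdist (x1, y1) S"
      unfolding infdist_notempty[OF Sne]
      by (rule cINF_greatest[OF Sne]) (use closest_point_exists(2)[OF closedS Sne] p_def in auto)
  qed
  have Gx0: "Gx xs ys = 0"
  proof -
    have "(\<lambda>h. Gx xs ys \<bullet> h) = (\<lambda>h. 0)"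
      by (rule has_derivative_local_min[OF dx]) (use sad(2) in auto)
    then have "Gx xs ys \<bullet> Gx xs ys = 0" by meson
    then show ?thesis by simp
  qed
  have Gy0: "Gy xs ys = 0"
  proof -
    have "(\<lambda>h. (- Gy xs ys) \<bullet> h) = (\<lambda>h. 0)"
      by (rule has_derivative_local_min[OF dyn]) (use sad(1) in auto)
    then have "(- Gy xs ys) \<bullet> (- Gy xs ys) = 0" by meson
    then show ?thesis by simp
  qed
  define hx where "hx = x1 - xs"
  define hy where "hy = y1 - ys"
  define gx where "gx = Gx x1 y1"
  define gy where "gy = Gy x1 y1"
  define bx where "bx = Gx x1 ys"
  define cx where "cx = Gx xs y1"
  define bY where "bY = Gy x1 ys"
  define cy where "cy = Gy xs y1"
  define DD where "DD = (norm hx)\<^sup>2 + (norm hy)\<^sup>2"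
  have infd2: "(infdist (x1, y1) S)\<^sup>2 = DD"
    unfolding infd pxy dist_norm DD_def hx_def hy_def by (simp add: normsq_pair)
  have grow: "gx \<bullet> hx - gy \<bullet> hy \<ge> \<mu> * DD"
  proof -
    have "\<forall>x y. Gx x y \<bullet> (x - fst (closest_point S (x, y))) - Gy x y \<bullet> (y - snd (closest_point S (x, y)))
        \<ge> \<mu> * (infdist (x, y) S)\<^sup>2"
      using assms(6) unfolding quadratic_gradient_growth_def Let_def S_def by simp
    then have "Gx x1 y1 \<bullet> (x1 - fst p) - Gy x1 y1 \<bullet> (y1 - snd p) \<ge> \<mu> * (infdist (x1, y1) S)\<^sup>2"
      unfolding p_def by blast
    then show ?thesis unfolding infd2 gx_def gy_def hx_def hy_def xs_def ys_def .
  qed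
  have lhs: "infdist (x1 - t *\<^sub>R gx, y1 + t *\<^sub>R gy) S \<le> norm (hx - t *\<^sub>R gx, hy + t *\<^sub>R gy)"
  proof -
    have "infdist (x1 - t *\<^sub>R gx, y1 + t *\<^sub>R gy) S \<le> dist (x1 - t *\<^sub>R gx, y1 + t *\<^sub>R gy) p"
      by (rule infdist_le[OF pS])
    also have "\<dots> = norm (hx - t *\<^sub>R gx, hy + t *\<^sub>R gy)"
      unfolding pxy dist_norm hx_def hy_def by (simp add: algebra_simps)
    finally show ?thesis .
  qed
  have lhs2: "(infdist (x1 - t *\<^sub>R gx, y1 + t *\<^sub>R gy) S)\<^sup>2 \<le> (norm (hx - t *\<^sub>R gx))\<^sup>2 + (norm (hy + t *\<^sub>R gy))\<^sup>2"
  proof -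
    have "(infdist (x1 - t *\<^sub>R gx, y1 + t *\<^sub>R gy) S)\<^sup>2 \<le> (norm (hx - t *\<^sub>R gx, hy + t *\<^sub>R gy))\<^sup>2"
      using lhs infdist_nonneg by (intro power_mono) auto
    then show ?thesis by (simp add: normsq_pair)
  qed
  define \<alpha> where "\<alpha> = t * (2 * t * Lxy * sqrt (\<mu> * (L - \<mu>)) + \<mu> * (L * t - 2) + t * Lxy\<^sup>2) + 1"
  have main: "(norm (hx - t *\<^sub>R gx))\<^sup>2 + (norm (hy + t *\<^sub>R gy))\<^sup>2 \<le> \<alpha> * DD"
  proof (cases "DD > 0")
    case False
    then have "DD = 0" unfolding DD_def by (smt (verit) zero_le_power2)
    then have "hx = 0" "hy = 0" unfolding DD_def by (auto simp: add_nonneg_eq_0_iff)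
    then have "x1 = xs" "y1 = ys" unfolding hx_def hy_def by auto
    then have "gx = 0" "gy = 0" unfolding gx_def gy_def using Gx0 Gy0 by auto
    then show ?thesis using \<open>hx = 0\<close> \<open>hy = 0\<close> \<open>DD = 0\<close> by simp
  next
    case True
    have nm1: "norm (0 - v) = norm v" for v :: 'a by simp
    have i1: "F x1 ys \<ge> F xs ys + (norm bx)\<^sup>2 / (2 * L)"
      using cocx[where a=xs and b=x1 and y=ys] Gx0 unfolding bx_def by simp
    have i2: "F xs ys \<ge> F x1 ys - bx \<bullet> hx + (norm bx)\<^sup>2 / (2 * L)"
    proof -
      have "bx \<bullet> (xs - x1) = - (bx \<bullet> hx)" unfolding hx_def by (simp add: inner_diff_right)
      then show ?thesis using cocx[where a=x1 and b=xs and y=ys] Gx0 unfolding bx_def by simp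
    qed
    have i3: "F x1 y1 \<ge> F xs y1 + cx \<bullet> hx + (norm (gx - cx))\<^sup>2 / (2 * L)"
      using cocx[where a=xs and b=x1 and y=y1] unfolding cx_def gx_def hx_def by simp
    have i4: "F xs y1 \<ge> F x1 y1 - gx \<bullet> hx + (norm (gx - cx))\<^sup>2 / (2 * L)"
    proof -
      have "gx \<bullet> (xs - x1) = - (gx \<bullet> hx)" unfolding hx_def by (simp add: inner_diff_right)
      moreover have "norm (cx - gx) = norm (gx - cx)" by (rule norm_minus_commute)
      ultimately show ?thesis using cocx[where a=x1 and b=xs and y=y1] unfolding cx_def gx_def by simp
    qed
    have j1: "F xs y1 \<le> F xs ys - (norm cy)\<^sup>2 / (2 * L)"
      using cocy[where a=ys and b=y1 and x=xs] Gy0 unfolding cy_def by simp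
    have j2: "F xs ys \<le> F xs y1 - cy \<bullet> hy - (norm cy)\<^sup>2 / (2 * L)"
    proof -
      have "(- cy) \<bullet> (ys - y1) = cy \<bullet> hy" unfolding hy_def by (simp add: inner_diff_right)
      then show ?thesis using cocy[where a=y1 and b=ys and x=xs] Gy0 unfolding cy_def by simp
    qed
    have j3: "F x1 y1 \<le> F x1 ys + bY \<bullet> hy - (norm (gy - bY))\<^sup>2 / (2 * L)"
    proof -
      have "(- bY) \<bullet> (y1 - ys) = - (bY \<bullet> hy)" unfolding hy_def by simp
      moreover have "norm (- gy - - bY) = norm (gy - bY)"
      proof -
        have "- gy - - bY = - (gy - bY)" by simp
        then show ?thesis by (simp only: norm_minus_cancel)
      qed
      ultimately show ?thesis using cocy[where a=ys and b=y1 and x=x1] unfolding bY_def gy_def by simp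
    qed
    have j4: "F x1 ys \<le> F x1 y1 - gy \<bullet> hy - (norm (gy - bY))\<^sup>2 / (2 * L)"
    proof -
      have "(- gy) \<bullet> (ys - y1) = gy \<bullet> hy" unfolding hy_def by (simp add: inner_diff_right)
      moreover have "norm (- bY - - gy) = norm (gy - bY)"
      proof -
        have "- bY - - gy = gy - bY" by simp
        then show ?thesis by (simp only:)
      qed
      ultimately show ?thesis using cocy[where a=y1 and b=ys and x=x1] unfolding bY_def gy_def by simp
    qed
    have k1: "norm cx \<le> Lxy * norm hy" using lxy1[where x=xs and ba=ys and bb=y1] Gx0 unfolding cx_def hy_def by simp
    have k2: "norm (gx - bx) \<le> Lxy * norm hy" using lxy1[where x=x1 and ba=ys and bb=y1] unfolding gx_def bx_def hy_def by simp
    have k3: "norm bY \<le> Lxy * norm hx" using lxy2[where aa=xs and ab=x1 and y=ys] Gy0 unfolding bY_def hx_def by simp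
    have k4: "norm (gy - cy) \<le> Lxy * norm hx" using lxy2[where aa=xs and ab=x1 and y=y1] unfolding gy_def cy_def hx_def by simp
    show ?thesis unfolding \<alpha>_def DD_def
      by (rule four_point[OF L Lxy mu t tb[unfolded K_def] True[unfolded DD_def] i1 i2 i3 i4 j1 j2 j3 j4 k1 k2 k3 k4 grow[unfolded DD_def]])
  qed
  show ?thesis using lhs2 main infd2 unfolding S_def \<alpha>_def L_def gx_def gy_def by simp
qed

end
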